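(* Let $c_1\ge c_2>0$, let $c(x)=c_1$ for $x<0$ and $c(x)=c_2$ for $x\ge0$, let $\rho\in(0,1)$, and let $\rho(x,t)$ be the macroscopic density of the inhomogeneous TASEP with speed function $c$ and constant initial profile $\rho_0\equiv\rho$ (as described in the context). Let $\rho^*=\frac12-\frac12\sqrt{1-c_2/c_1}$. Then, for $t>0$: (i) If $0<\rho<\rho^*$, with $r^*=\frac12-\frac12\sqrt{1-4\rho(1-\rho)c_1/c_2}$: $\rho(x,t)=\rho$ for $x\le0$; $=r^*$ for $0\le x\le c_2(1-2r^* )t$; $=\frac12(1-\frac{x}{tc_2})$ for $c_2(1-2r^* )t\le x\le c_2(1-2\rho)t$; $=\rho$ for $x\ge(1-2\rho)tc_2$. (ii) If $\rho^*\le\rho\le\frac12$: $\rho(x,t)=\rho$ for $x\le-tc_1(\rho-\rho^* )$; $=1-\rho^*$ for $-tc_1(\rho-\rho^* )\le x\le0$; $=\frac12(1-\frac{x}{tc_2})$ for $0\le x\le(1-2\rho)tc_2$; $=\rho$ for $x\ge(1-2\rho)tc_2$. (iii) If $\rho\ge\frac12$, with $r^*=\frac12-\frac12\sqrt{1-4\rho(1-\rho)c_2/c_1}$: $\rho(x,t)=\rho$ for $x\le-tc_1(\rho-r^* )$; $=1-r^*$ for $-tc_1(\rho-r^* )\le x\le0$; $=\rho$ for $x>0$.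
   Context: Macroscopic density: $\rho(x,t)=v_x(x,t)$ where $v(x,t)=\sup_w\{v_0(w(0))-\int_0^tc(w(s))g(w'(s)/c(w(s)))ds\}$ over continuous piecewise $C^1$ paths $w:[0,t]\to\mathbb{R}$ with $w(t)=x$, $v_0(x)=\rho x$, and $g(y)=-y$ for $y\le-1$, $\frac14(1-y)^2$ for $|y|\le1$, $0$ for $y\ge1$. By the hydrodynamic limit, this is the a.s. limit of the empirical density of the TASEP in which a particle at $i$ jumps to $i+1$ at rate $c(i/n)$ if vacant, run for time $nt$, when the initial configurations satisfy $n^{-1}\sum_{i=\lfloor na\rfloor+1}^{\lfloor nb\rfloor}\eta^n_i(0)\to\rho(b-a)$ a.s. for all $a<b$. *)

theory Defs
  imports "HOL-Analysis.Analysis"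
begin

definition tasep_g :: "real \<Rightarrow> real" where
  "tasep_g y = (if y \<le> -1 then - y else if y \<le> 1 then (1 - y)^2 / 4 else 0)"

definition step_speed :: "real \<Rightarrow> real \<Rightarrow> real \<Rightarrow> real" where
  "step_speed c1 c2 x = (if x < 0 then c1 else c2)"

definition path_cost :: "(real \<Rightarrow> real) \<Rightarrow> real \<Rightarrow> (real \<Rightarrow> real) \<Rightarrow> real" where
  "path_cost c t w =
     integral {0..t} (\<lambda>s. c (w s) * tasep_g (vector_derivative w (at s) / c (w s)))"

text \<open>Admissible paths: continuous piecewise C1 on [0,t], ending at x, with
  integrable running cost (the integrand is nonnegative, so non-integrable paths
  have infinite cost and do not contribute to the supremum).\<close>
definition admissible_path :: "(real \<Rightarrow> real) \<Rightarrow> real \<Rightarrow> real \<Rightarrow> (real \<Rightarrow> real) \<Rightarrow> bool" where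
  "admissible_path c t x w \<longleftrightarrow>
     w piecewise_C1_differentiable_on {0..t} \<and> w t = x \<and>
     (\<lambda>s. c (w s) * tasep_g (vector_derivative w (at s) / c (w s))) integrable_on {0..t}"

definition value_fn :: "(real \<Rightarrow> real) \<Rightarrow> (real \<Rightarrow> real) \<Rightarrow> real \<Rightarrow> real \<Rightarrow> real" where
  "value_fn c v0 x t = Sup {v0 (w 0) - path_cost c t w | w. admissible_path c t x w}"

end

theory Submission
  imports Defs
begin


lemma g_fenchel:
  fixes p u :: real
  assumes "0 \<le> p" "p \<le> 1"
  shows "- p * u + p * (1 - p) \<le> tasep_g u"
proof (cases "u \<le> -1")
  case True
  have "(1-p)*p \<le> (1-p)*(-u)" using True assms by (intro mult_left_mono) auto
  then show ?thesis using True assms by (simp add: tasep_g_def algebra_simps)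
next
  case False
  show ?thesis
  proof (cases "u \<le> 1")
    case True
    have "tasep_g u - (- p * u + p * (1 - p)) = ((1 - u)/2 - p)^2"
      using True False by (simp add: tasep_g_def power2_eq_square field_simps)
    then show ?thesis by (smt (verit) zero_le_power2)
  next
    case F2: False
    have "0 \<le> p * (u - 1 + p)" using assms F2 by simp
    then show ?thesis using assms False F2 by (simp add: tasep_g_def algebra_simps)
  qed
qed

lemma cost_fenchel:
  fixes k p q a :: real
  assumes "k > 0" "0 \<le> p" "p \<le> 1" "a \<le> k * p * (1 - p)"
  shows "- p * q + a \<le> k * tasep_g (q / k)"
proof -
  have "- p * (q/k) + p * (1 - p) \<le> tasep_g (q / k)" using g_fenchel assms by blast
  then have "k * (- p * (q/k) + p * (1 - p)) \<le> k * tasep_g (q / k)"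
    using assms(1) by (intro mult_left_mono) auto
  moreover have "k * (- p * (q/k)) = - p * q" using assms(1) by simp
  ultimately show ?thesis using assms by (simp add: algebra_simps)
qed

definition cint :: "(real \<Rightarrow> real) \<Rightarrow> (real \<Rightarrow> real) \<Rightarrow> real \<Rightarrow> real" where
  "cint c w s = c (w s) * tasep_g (vector_derivative w (at s) / c (w s))"

lemma calib:
  fixes c w Phi Phi' :: "real \<Rightarrow> real" and a \<alpha> \<beta> :: real
  assumes dP: "\<And>y. (Phi has_real_derivative Phi' y) (at y)"
    and pw: "w piecewise_C1_differentiable_on {\<alpha>..\<beta>}" and ab: "\<alpha> \<le> \<beta>"
    and int: "cint c w integrable_on {\<alpha>..\<beta>}"
    and cond: "\<And>s. s \<in> {\<alpha><..\<beta>} \<Longrightarrow> c (w s) > 0 \<and> 0 \<le> Phi' (w s) \<and> Phi' (w s) \<le> 1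
                      \<and> a \<le> c (w s) * Phi' (w s) * (1 - Phi' (w s))"
  shows "Phi (w \<alpha>) - Phi (w \<beta>) + a * (\<beta> - \<alpha>) \<le> integral {\<alpha>..\<beta>} (cint c w)"
proof -
  from pw obtain S D where cont: "continuous_on {\<alpha>..\<beta>} w" and fin: "finite S"
    and der: "\<And>x. x \<in> {\<alpha>..\<beta>} - S \<Longrightarrow> (w has_vector_derivative D x) (at x)"
    unfolding piecewise_C1_differentiable_on_def C1_differentiable_on_def by blast
  let ?F = "\<lambda>s. Phi' (w s) * vector_derivative w (at s)"
  have ftc: "(?F has_integral (Phi (w \<beta>) - Phi (w \<alpha>))) {\<alpha>..\<beta>}"
  proof (rule fundamental_theorem_of_calculus_interior_strong[OF fin ab])
    fix x assume x: "x \<in> {\<alpha><..<\<beta>} - S"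
    then have d: "(w has_vector_derivative D x) (at x)" using der by auto
    then have vd: "vector_derivative w (at x) = D x" by (rule vector_derivative_at)
    have "(w has_real_derivative D x) (at x)" using d
      by (simp add: has_real_derivative_iff_has_vector_derivative)
    then have "((\<lambda>s. Phi (w s)) has_real_derivative Phi' (w x) * D x) (at x)"
      by (rule DERIV_chain2[OF dP])
    then show "((\<lambda>s. Phi (w s)) has_vector_derivative ?F x) (at x)"
      using vd by (simp add: has_real_derivative_iff_has_vector_derivative)
  next
    have "continuous_on UNIV Phi"
      using dP by (meson DERIV_isCont continuous_at_imp_continuous_on)
    then show "continuous_on {\<alpha>..\<beta>} (\<lambda>s. Phi (w s))"
      using cont by (rule continuous_on_compose2) auto
  qed
  let ?L = "\<lambda>s. - ?F s + a"
  have hL: "(?L has_integral (- (Phi (w \<beta>) - Phi (w \<alpha>)) + a * (\<beta> - \<alpha>))) {\<alpha>..\<beta>}"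
    using has_integral_add[OF has_integral_neg[OF ftc] has_integral_const_real[of a \<alpha> \<beta>]] ab
    by (simp add: algebra_simps)
  let ?L2 = "\<lambda>s. if s = \<alpha> then cint c w s else ?L s"
  have hL2: "(?L2 has_integral (- (Phi (w \<beta>) - Phi (w \<alpha>)) + a * (\<beta> - \<alpha>))) {\<alpha>..\<beta>}"
    by (rule has_integral_spike_finite[OF _ _ hL, of "{\<alpha>}"]) auto
  have "- (Phi (w \<beta>) - Phi (w \<alpha>)) + a * (\<beta> - \<alpha>) \<le> integral {\<alpha>..\<beta>} (cint c w)"
  proof (rule has_integral_le[OF hL2 integrable_integral[OF int]])
    fix s assume s: "s \<in> {\<alpha>..\<beta>}"
    show "?L2 s \<le> cint c w s"
    proof (cases "s = \<alpha>")
      case False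
      then have "s \<in> {\<alpha><..\<beta>}" using s by auto
      from cond[OF this] show ?thesis using False unfolding cint_def
        using cost_fenchel[of "c (w s)" "Phi' (w s)" a "vector_derivative w (at s)"] by auto
    qed simp
  qed
  then show ?thesis by simp
qed

lemma DERIV_glue:
  fixes f g f' g' :: "real \<Rightarrow> real" and a x :: real
  assumes df: "\<And>y. (f has_real_derivative f' y) (at y)"
    and dg: "\<And>y. (g has_real_derivative g' y) (at y)"
    and e1: "f a = g a" and e2: "f' a = g' a"
  shows "((\<lambda>y. if y < a then f y else g y) has_real_derivative (if x < a then f' x else g' x)) (at x)"
proof -
  have cS: "closure {..<a} = {..a}" by simp
  have cT: "closure {a..} = {a..}" by simp
  have "((\<lambda>y. if y \<in> {..<a} then f y else g y) has_vector_derivative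
        (if x \<in> {..<a} then f' x else g' x)) (at x within UNIV)"
  proof (rule has_vector_derivative_If_within_closures[where S="{..<a}" and T="{a..}"])
    show "x \<in> {..<a} \<union> {a..}" by auto
    show "UNIV = {..<a} \<union> {a..}" by auto
    show "(f has_vector_derivative f' x) (at x within {..<a} \<union> (closure {..<a} \<inter> closure {a..}))"
      if "x \<in> {..<a} \<union> (closure {..<a} \<inter> closure {a..})"
      using df[of x] by (simp add: has_real_derivative_iff_has_vector_derivative[symmetric] has_field_derivative_at_within)
    show "(g has_vector_derivative g' x) (at x within {a..} \<union> (closure {..<a} \<inter> closure {a..}))"
      if "x \<in> {a..} \<union> (closure {..<a} \<inter> closure {a..})"
      using dg[of x] by (simp add: has_real_derivative_iff_has_vector_derivative[symmetric] has_field_derivative_at_within)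
    show "f x = g x" if "x \<in> closure {..<a}" "x \<in> closure {a..}" using that e1 by simp
    show "f' x = g' x" if "x \<in> closure {..<a}" "x \<in> closure {a..}" using that e2 by simp
  qed
  then show ?thesis by (simp add: has_real_derivative_iff_has_vector_derivative)
qed

definition kink :: "real \<Rightarrow> real \<Rightarrow> real \<Rightarrow> real \<Rightarrow> real" where
  "kink p1 p2 e y = (if y < -e then p1*y else if y < 0 then p2*y + (p2-p1)*y^2/(2*e) + (p2-p1)*e/2
                     else p2*y + (p2-p1)*e/2)"

definition kink' :: "real \<Rightarrow> real \<Rightarrow> real \<Rightarrow> real \<Rightarrow> real" where
  "kink' p1 p2 e y = (if y < -e then p1 else if y < 0 then p2 + (p2-p1)*y/e else p2)"

lemma kink_deriv:
  assumes "e > 0"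
  shows "(kink p1 p2 e has_real_derivative kink' p1 p2 e y) (at y)"
proof -
  have inner: "((\<lambda>y. if y < 0 then p2*y + (p2-p1)*y^2/(2*e) + (p2-p1)*e/2 else p2*y + (p2-p1)*e/2)
      has_real_derivative (if z < 0 then p2 + (p2-p1)*z/e else p2)) (at z)" for z
  proof (rule DERIV_glue)
    show "((\<lambda>y. p2*y + (p2-p1)*y^2/(2*e) + (p2-p1)*e/2) has_real_derivative p2 + (p2-p1)*y/e) (at y)" for y
      using assms by (auto intro!: derivative_eq_intros simp: field_simps)
    show "((\<lambda>y. p2*y + (p2-p1)*e/2) has_real_derivative p2) (at y)" for y
      by (auto intro!: derivative_eq_intros)
  qed simp_all
  have "((\<lambda>y. if y < -e then p1*y else (if y < 0 then p2*y + (p2-p1)*y^2/(2*e) + (p2-p1)*e/2 else p2*y + (p2-p1)*e/2))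
      has_real_derivative (if y < -e then p1 else (if y < 0 then p2 + (p2-p1)*y/e else p2))) (at y)"
  proof (rule DERIV_glue[OF _ inner])
    show "((*) p1 has_real_derivative p1) (at y)" for y by (auto intro!: derivative_eq_intros)
    show "p1 * - e = (if - e < 0 then p2 * - e + (p2 - p1) * (- e)\<^sup>2 / (2 * e) + (p2 - p1) * e / 2 else p2 * - e + (p2 - p1) * e / 2)"
      using assms by (simp add: power2_eq_square field_simps)
    show "p1 = (if - e < 0 then p2 + (p2 - p1) * - e / e else p2)" using assms by simp
  qed
  then show ?thesis unfolding kink_def[abs_def] kink'_def by simp
qed

lemma kink_ge:
  assumes "e > 0" "p1 \<le> rho" "rho \<le> p2"
  shows "rho * y \<le> kink p1 p2 e y"
proof -
  consider "y < -e" | "-e \<le> y" "y < 0" | "0 \<le> y" by linarith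
  then show ?thesis
  proof cases
    case 1 then show ?thesis using assms by (simp add: kink_def mult_right_mono_neg)
  next
    case 2
    have "p2*y + (p2-p1)*y^2/(2*e) + (p2-p1)*e/2 - p1*y = (p2-p1)*(y+e)^2/(2*e)"
      using assms by (simp add: power2_eq_square field_simps)
    moreover have "0 \<le> (p2-p1)*(y+e)^2/(2*e)" using assms by simp
    moreover have "rho*y \<le> p1*y" using 2 assms by (simp add: mult_right_mono_neg)
    moreover have "kink p1 p2 e y = p2*y + (p2-p1)*y^2/(2*e) + (p2-p1)*e/2" using 2 by (simp add: kink_def)
    ultimately show ?thesis by linarith
  next
    case 3
    have "rho*y \<le> p2*y" using 3 assms by (simp add: mult_right_mono)
    moreover have "0 \<le> (p2 - p1) * e / 2" using assms by simp
    moreover have "kink p1 p2 e y = p2*y + (p2-p1)*e/2" using 3 assms(1) by (simp add: kink_def)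
    ultimately show ?thesis by linarith
  qed
qed

lemma kink'_range:
  assumes "e > 0" "p1 \<le> p2"
  shows "p1 \<le> kink' p1 p2 e y \<and> kink' p1 p2 e y \<le> p2"
proof -
  have "p1 \<le> p2 + (p2-p1)*y/e \<and> p2 + (p2-p1)*y/e \<le> p2" if "-e \<le> y" "y < 0"
  proof -
    have "(p2-p1)*y/e \<le> 0" using that assms by (simp add: divide_nonpos_pos mult_nonneg_nonpos)
    moreover have "-(p2-p1) \<le> (p2-p1)*y/e"
    proof -
      have "(p2-p1)*(-e) \<le> (p2-p1)*y" using that assms by (intro mult_left_mono) auto
      then show ?thesis using assms by (simp add: field_simps)
    qed
    ultimately show ?thesis by linarith
  qed
  then show ?thesis using assms by (auto simp: kink'_def)
qed

lemma qq_min: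
  fixes p1 p2 q :: real
  assumes "p1 \<le> q" "q \<le> p2"
  shows "min (p1*(1-p1)) (p2*(1-p2)) \<le> q*(1-q)"
proof (cases "q + p1 \<le> 1")
  case True
  have "0 \<le> (q-p1)*(1-q-p1)" using True assms by simp
  then show ?thesis by (simp add: algebra_simps min_def)
next
  case False
  have "0 \<le> (p2-q)*(q+p2-1)" using False assms by simp
  then show ?thesis by (simp add: algebra_simps min_def)
qed

lemma kinked_bound:
  fixes c1 c2 rho p1 p2 a e \<alpha> \<beta> :: real and w :: "real \<Rightarrow> real"
  assumes "c2 > 0" "c2 \<le> c1" "e > 0" "0 \<le> p1" "p1 \<le> rho" "rho \<le> p2" "p2 \<le> 1"
    and "a \<le> c1 * p1 * (1 - p1)" "a \<le> c2 * p2 * (1 - p2)"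
    and pw: "w piecewise_C1_differentiable_on {\<alpha>..\<beta>}" and ab: "\<alpha> \<le> \<beta>"
    and int: "cint (step_speed c1 c2) w integrable_on {\<alpha>..\<beta>}"
  shows "rho * w \<alpha> - integral {\<alpha>..\<beta>} (cint (step_speed c1 c2) w) \<le> kink p1 p2 e (w \<beta>) - a * (\<beta> - \<alpha>)"
proof -
  have "kink p1 p2 e (w \<alpha>) - kink p1 p2 e (w \<beta>) + a * (\<beta> - \<alpha>) \<le> integral {\<alpha>..\<beta>} (cint (step_speed c1 c2) w)"
  proof (rule calib[OF kink_deriv[OF assms(3)] pw ab int])
    fix s
    let ?y = "w s" let ?q = "kink' p1 p2 e (w s)"
    have r: "p1 \<le> ?q \<and> ?q \<le> p2" using kink'_range assms by auto
    have "a \<le> step_speed c1 c2 ?y * ?q * (1 - ?q)"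
    proof (cases "?y < 0")
      case True
      have "min (p1*(1-p1)) (p2*(1-p2)) \<le> ?q*(1-?q)" using qq_min r by blast
      moreover have "c2 * (p2*(1-p2)) \<le> c1 * (p2*(1-p2))"
        using assms by (intro mult_right_mono) auto
      moreover have "a \<le> c1 * min (p1*(1-p1)) (p2*(1-p2))"
        using assms calculation(2) by (simp add: min_def mult.assoc)
      ultimately have "a \<le> c1 * (?q*(1-?q))" using assms
        by (meson mult_left_mono order_trans less_le_trans less_imp_le)
      then show ?thesis using True by (simp add: step_speed_def mult.assoc)
    next
      case False
      then show ?thesis using assms by (simp add: step_speed_def kink'_def)
    qed
    then show "step_speed c1 c2 ?y > 0 \<and> 0 \<le> ?q \<and> ?q \<le> 1 \<and> a \<le> step_speed c1 c2 ?y * ?q * (1 - ?q)"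
      using r assms by (auto simp: step_speed_def)
  qed
  moreover have "rho * w \<alpha> \<le> kink p1 p2 e (w \<alpha>)" using kink_ge assms by blast
  ultimately show ?thesis by linarith
qed




definition path2 :: "real \<Rightarrow> real \<Rightarrow> real \<Rightarrow> real \<Rightarrow> real \<Rightarrow> real" where
  "path2 y0 A B s0 s = y0 + A * min (s - s0) 0 + B * max (s - s0) 0"

lemma path2_deriv:
  assumes "s \<noteq> s0"
  shows "(path2 y0 A B s0 has_vector_derivative (if s < s0 then A else B)) (at s)"
proof (cases "s < s0")
  case True
  have ev: "eventually (\<lambda>x. x \<in> {..<s0}) (nhds s)" using True by (intro eventually_nhds_in_open) auto
  have "((\<lambda>x. y0 + A * (x - s0)) has_real_derivative A) (at s)" by (auto intro!: derivative_eq_intros)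
  moreover have "eventually (\<lambda>x. path2 y0 A B s0 x = y0 + A * (x - s0)) (nhds s)"
    using ev by eventually_elim (auto simp: path2_def)
  moreover have "(path2 y0 A B s0 has_real_derivative A) (at s) \<longleftrightarrow> ((\<lambda>x. y0 + A * (x - s0)) has_real_derivative A) (at s)"
    by (rule DERIV_cong_ev[OF refl calculation(2) refl])
  ultimately have "(path2 y0 A B s0 has_real_derivative A) (at s)" by blast
  then show ?thesis using True by (simp add: has_real_derivative_iff_has_vector_derivative)
next
  case False
  then have F: "s > s0" using assms by auto
  have ev: "eventually (\<lambda>x. x \<in> {s0<..}) (nhds s)" using F by (intro eventually_nhds_in_open) auto
  have "((\<lambda>x. y0 + B * (x - s0)) has_real_derivative B) (at s)" by (auto intro!: derivative_eq_intros)
  moreover have "eventually (\<lambda>x. path2 y0 A B s0 x = y0 + B * (x - s0)) (nhds s)"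
    using ev by eventually_elim (auto simp: path2_def)
  moreover have "(path2 y0 A B s0 has_real_derivative B) (at s) \<longleftrightarrow> ((\<lambda>x. y0 + B * (x - s0)) has_real_derivative B) (at s)"
    by (rule DERIV_cong_ev[OF refl calculation(2) refl])
  ultimately have "(path2 y0 A B s0 has_real_derivative B) (at s)" by blast
  then show ?thesis using False by (simp add: has_real_derivative_iff_has_vector_derivative)
qed

lemma path2_pwC1: "path2 y0 A B s0 piecewise_C1_differentiable_on {0..t}"
  unfolding piecewise_C1_differentiable_on_def
proof
  show "continuous_on {0..t} (path2 y0 A B s0)" unfolding path2_def by (intro continuous_intros)
  show "\<exists>S. finite S \<and> path2 y0 A B s0 C1_differentiable_on {0..t} - S"
  proof (intro exI conjI)
    show "finite {s0}" by simp
    show "path2 y0 A B s0 C1_differentiable_on {0..t} - {s0}"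
      unfolding C1_differentiable_on_def
    proof (intro exI conjI ballI)
      fix x assume "x \<in> {0..t} - {s0}"
      then show "(path2 y0 A B s0 has_vector_derivative (if x < s0 then A else B)) (at x)"
        by (intro path2_deriv) auto
    next
      have "continuous_on ({..<s0} \<union> {s0<..}) (\<lambda>x. if x < s0 then A else B)"
      proof (rule continuous_on_cases_local_open)
      qed (auto intro: continuous_intros open_openin_trans)
      then show "continuous_on ({0..t} - {s0}) (\<lambda>x. if x < s0 then A else B)"
        by (rule continuous_on_subset) auto
    qed
  qed
qed

lemma path2_vd:
  "s \<noteq> s0 \<Longrightarrow> vector_derivative (path2 y0 A B s0) (at s) = (if s < s0 then A else B)"
  by (rule vector_derivative_at[OF path2_deriv])

lemma path2_cost:
  fixes c :: "real \<Rightarrow> real"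
  assumes st: "0 \<le> s0" "s0 \<le> t"
    and hc1: "\<And>s. 0 \<le> s \<Longrightarrow> s < s0 \<Longrightarrow> c (y0 + A*(s-s0)) = k1"
    and hc2: "\<And>s. s0 < s \<Longrightarrow> s \<le> t \<Longrightarrow> c (y0 + B*(s-s0)) = k2"
  shows "(cint c (path2 y0 A B s0) has_integral (s0 * (k1 * tasep_g (A/k1)) + (t - s0) * (k2 * tasep_g (B/k2)))) {0..t}"
proof -
  let ?w = "path2 y0 A B s0"
  have i1: "(cint c ?w has_integral (s0 * (k1 * tasep_g (A/k1)))) {0..s0}"
  proof (rule has_integral_spike_finite[of "{s0}"])
    show "((\<lambda>x. k1 * tasep_g (A/k1)) has_integral (s0 * (k1 * tasep_g (A/k1)))) {0..s0}"
      using has_integral_const_real[of "k1 * tasep_g (A/k1)" 0 s0] st by simp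
    fix x assume x: "x \<in> {0..s0} - {s0}"
    then have "?w x = y0 + A*(x-s0)" by (simp add: path2_def)
    then show "cint c ?w x = k1 * tasep_g (A/k1)" using x hc1 path2_vd[of x s0] by (simp add: cint_def)
  qed simp
  have i2: "(cint c ?w has_integral ((t - s0) * (k2 * tasep_g (B/k2)))) {s0..t}"
  proof (rule has_integral_spike_finite[of "{s0}"])
    show "((\<lambda>x. k2 * tasep_g (B/k2)) has_integral ((t - s0) * (k2 * tasep_g (B/k2)))) {s0..t}"
      using has_integral_const_real[of "k2 * tasep_g (B/k2)" s0 t] st by simp
    fix x assume x: "x \<in> {s0..t} - {s0}"
    then have "?w x = y0 + B*(x-s0)" by (simp add: path2_def)
    then show "cint c ?w x = k2 * tasep_g (B/k2)" using x hc2 path2_vd[of x s0] by (simp add: cint_def)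
  qed simp
  show ?thesis by (rule has_integral_combine[OF st i1 i2])
qed

lemma path2_value:
  fixes c :: "real \<Rightarrow> real"
  assumes st: "0 \<le> s0" "s0 \<le> t"
    and hc1: "\<And>s. 0 \<le> s \<Longrightarrow> s < s0 \<Longrightarrow> c (y0 + A*(s-s0)) = k1"
    and hc2: "\<And>s. s0 < s \<Longrightarrow> s \<le> t \<Longrightarrow> c (y0 + B*(s-s0)) = k2"
  shows "admissible_path c t (y0 + B * (t - s0)) (path2 y0 A B s0)"
    and "path_cost c t (path2 y0 A B s0) = s0 * (k1 * tasep_g (A/k1)) + (t - s0) * (k2 * tasep_g (B/k2))"
    and "path2 y0 A B s0 0 = y0 - A * s0"
proof -
  note h = path2_cost[OF assms]
  show "admissible_path c t (y0 + B * (t - s0)) (path2 y0 A B s0)"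
    unfolding admissible_path_def using path2_pwC1 h st
    by (auto simp: path2_def cint_def[abs_def] has_integral_integrable)
  show "path_cost c t (path2 y0 A B s0) = s0 * (k1 * tasep_g (A/k1)) + (t - s0) * (k2 * tasep_g (B/k2))"
    unfolding path_cost_def using h by (simp add: cint_def[abs_def] integral_unique)
  show "path2 y0 A B s0 0 = y0 - A * s0" using st by (simp add: path2_def)
qed




lemma adm_unfold:
  assumes "admissible_path c t x w"
  shows "w piecewise_C1_differentiable_on {0..t}" "w t = x" "cint c w integrable_on {0..t}"
  using assms unfolding admissible_path_def cint_def[abs_def] by auto

lemma cost_unfold: "path_cost c t w = integral {0..t} (cint c w)"
  unfolding path_cost_def cint_def[abs_def] by simp

lemma linear_left_bound:
  fixes c1 c2 q a \<alpha> \<beta> :: real and w :: "real \<Rightarrow> real"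
  assumes "c1 > 0" "0 \<le> q" "q \<le> 1" "a \<le> c1 * q * (1 - q)"
    and pw: "w piecewise_C1_differentiable_on {\<alpha>..\<beta>}" and ab: "\<alpha> \<le> \<beta>"
    and int: "cint (step_speed c1 c2) w integrable_on {\<alpha>..\<beta>}"
    and neg: "\<And>s. s \<in> {\<alpha><..\<beta>} \<Longrightarrow> w s < 0"
  shows "q * w \<alpha> - q * w \<beta> + a * (\<beta> - \<alpha>) \<le> integral {\<alpha>..\<beta>} (cint (step_speed c1 c2) w)"
proof (rule calib[where Phi' = "\<lambda>_. q", OF _ pw ab int])
  show "((*) q has_real_derivative q) (at y)" for y by (auto intro!: derivative_eq_intros)
  fix s assume "s \<in> {\<alpha><..\<beta>}"
  then show "0 < step_speed c1 c2 (w s) \<and> 0 \<le> q \<and> q \<le> 1 \<and> a \<le> step_speed c1 c2 (w s) * q * (1 - q)"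
    using neg assms by (auto simp: step_speed_def)
qed

lemma half_le: "0 \<le> p1 \<Longrightarrow> p2 \<le> 1 \<Longrightarrow> e > 0 \<Longrightarrow> (p2-p1)*e/2 \<le> (e::real)"
proof -
  assume "0 \<le> p1" "p2 \<le> 1" "e > 0"
  then have "(p2-p1)*e \<le> 2*e" by (intro mult_right_mono) auto
  then show ?thesis by simp
qed

locale kconds =
  fixes c1 c2 rho p1 p2 a :: real
  assumes c2pos: "c2 > 0" and c21: "c2 \<le> c1" and p1nn: "0 \<le> p1" and p1r: "p1 \<le> rho"
    and rp2: "rho \<le> p2" and p21: "p2 \<le> 1"
    and a1: "a \<le> c1 * p1 * (1 - p1)" and a2: "a \<le> c2 * p2 * (1 - p2)"
begin

lemma kink_ub_eps:
  assumes adm: "admissible_path (step_speed c1 c2) t x w" and t: "t \<ge> 0" and e: "e > 0"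
  shows "rho * w 0 - path_cost (step_speed c1 c2) t w \<le> kink p1 p2 e x - a * t"
  using kinked_bound[OF c2pos c21 e p1nn p1r rp2 p21 a1 a2 adm_unfold(1)[OF adm] t adm_unfold(3)[OF adm]]
    adm_unfold(2)[OF adm] by (simp add: cost_unfold)

lemma kink_ub:
  assumes adm: "admissible_path (step_speed c1 c2) t x w" and t: "t \<ge> 0"
  shows "rho * w 0 - path_cost (step_speed c1 c2) t w \<le> (if x < 0 then p1 * x else p2 * x) - a * t"
proof (cases "x < 0")
  case True
  have "rho * w 0 - path_cost (step_speed c1 c2) t w \<le> kink p1 p2 (-x/2) x - a * t"
    using kink_ub_eps[OF adm t] True by simp
  then show ?thesis using True by (simp add: kink_def)
next
  case False
  have "rho * w 0 - path_cost (step_speed c1 c2) t w \<le> p2 * x - a * t"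
  proof (rule field_le_epsilon)
    fix e :: real assume e: "e > 0"
    have "rho * w 0 - path_cost (step_speed c1 c2) t w \<le> kink p1 p2 e x - a * t"
      using kink_ub_eps[OF adm t e] .
    moreover have "kink p1 p2 e x = p2 * x + (p2 - p1) * e / 2" using False e by (simp add: kink_def)
    moreover have "(p2 - p1) * e / 2 \<le> e" using half_le p1nn p21 e by blast
    ultimately show "rho * w 0 - path_cost (step_speed c1 c2) t w \<le> p2 * x - a * t + e" by linarith
  qed
  then show ?thesis using False by simp
qed

lemma split_ub:
  fixes q aL :: real
  assumes adm: "admissible_path (step_speed c1 c2) t x w" and t: "t \<ge> 0" and x: "x < 0"
    and q: "0 \<le> q" "q \<le> 1" "a \<le> c1 * q * (1 - q)"
    and aL: "aL \<le> c1 * rho * (1 - rho)" and rho: "rho \<le> 1"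
  shows "rho * w 0 - path_cost (step_speed c1 c2) t w \<le> max (rho * x - aL * t) (q * x - a * t)"
proof -
  let ?c = "step_speed c1 c2"
  note pw = adm_unfold(1)[OF adm] and wt = adm_unfold(2)[OF adm] and int = adm_unfold(3)[OF adm]
  have c1pos: "c1 > 0" using c2pos c21 by simp
  have rho0: "0 \<le> rho" using p1nn p1r by simp
  have cont: "continuous_on {0..t} w" using pw by (simp add: piecewise_C1_differentiable_on_def)
  define S where "S = {s \<in> {0..t}. 0 \<le> w s}"
  show ?thesis
  proof (cases "S = {}")
    case True
    have "rho * w 0 - rho * w t + aL * (t - 0) \<le> integral {0..t} (cint ?c w)"
    proof (rule linear_left_bound[OF c1pos rho0 rho aL pw t int])
      fix s assume "s \<in> {0<..t}"
      moreover have "s \<notin> S" using True by auto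
      ultimately show "w s < 0" unfolding S_def by auto
    qed
    then have "rho * w 0 - path_cost ?c t w \<le> rho * x - aL * t" using wt by (simp add: cost_unfold)
    then show ?thesis by linarith
  next
    case False
    have clS: "closed S" unfolding S_def
      by (rule continuous_on_closed_Collect_le[OF continuous_on_const cont]) simp
    have bS: "bdd_above S" unfolding S_def by (auto intro: bdd_aboveI[of _ t])
    define \<tau> where "\<tau> = Sup S"
    have tS: "\<tau> \<in> S" unfolding \<tau>_def using closed_contains_Sup[OF False bS clS] .
    then have t0: "0 \<le> \<tau>" "\<tau> \<le> t" "0 \<le> w \<tau>" unfolding S_def by auto
    have after: "w s < 0" if "s \<in> {\<tau><..t}" for s
    proof (rule ccontr)
      assume "\<not> w s < 0"
      then have "s \<in> S" using that t0 unfolding S_def by auto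
      then have "s \<le> \<tau>" unfolding \<tau>_def using bS by (rule cSup_upper)
      then show False using that by auto
    qed
    have wtau: "w \<tau> = 0"
    proof -
      obtain s where s: "\<tau> \<le> s" "s \<le> t" "w s = 0"
        using IVT2'[of w t 0 \<tau>] t0 wt x continuous_on_subset[OF cont, of "{\<tau>..t}"] by auto
      show ?thesis
      proof (cases "s = \<tau>")
        case False
        then have "s \<in> {\<tau><..t}" using s by auto
        then show ?thesis using after s by force
      qed (use s in simp)
    qed
    have I: "integral {0..\<tau>} (cint ?c w) + integral {\<tau>..t} (cint ?c w) = integral {0..t} (cint ?c w)"
      using Henstock_Kurzweil_Integration.integral_combine[OF t0(1,2) int] .
    have pw1: "w piecewise_C1_differentiable_on {0..\<tau>}"
      by (rule piecewise_C1_differentiable_on_subset[OF pw]) (use t0 in auto)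
    have pw2: "w piecewise_C1_differentiable_on {\<tau>..t}"
      by (rule piecewise_C1_differentiable_on_subset[OF pw]) (use t0 in auto)
    have int1: "cint ?c w integrable_on {0..\<tau>}" by (rule integrable_on_subinterval[OF int]) (use t0 in auto)
    have int2: "cint ?c w integrable_on {\<tau>..t}" by (rule integrable_on_subinterval[OF int]) (use t0 in auto)
    have B2: "q * w \<tau> - q * w t + a * (t - \<tau>) \<le> integral {\<tau>..t} (cint ?c w)"
      by (rule linear_left_bound[OF c1pos q pw2 t0(2) int2 after])
    have "rho * w 0 - path_cost ?c t w \<le> q * x - a * t"
    proof (rule field_le_epsilon)
      fix e :: real assume e: "e > 0"
      have B1: "rho * w 0 - integral {0..\<tau>} (cint ?c w) \<le> kink p1 p2 e (w \<tau>) - a * (\<tau> - 0)"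
        using kinked_bound[OF c2pos c21 e p1nn p1r rp2 p21 a1 a2 pw1 t0(1) int1] by simp
      moreover have "kink p1 p2 e (w \<tau>) = (p2 - p1) * e / 2" using wtau e by (simp add: kink_def)
      moreover have "(p2 - p1) * e / 2 \<le> e" using half_le p1nn p21 e by blast
      ultimately show "rho * w 0 - path_cost ?c t w \<le> q * x - a * t + e"
        using B2 I wtau wt by (simp add: cost_unfold algebra_simps)
    qed
    then show ?thesis by linarith
  qed
qed

end




lemma g_dens:
  fixes p :: real
  assumes "0 \<le> p" "p \<le> 1"
  shows "tasep_g (1 - 2*p) = p^2"
proof (cases "1 - 2*p \<le> -1")
  case True
  then have "p = 1" using assms by simp
  then show ?thesis by (simp add: tasep_g_def)
next
  case False
  then show ?thesis using assms by (simp add: tasep_g_def power2_eq_square field_simps)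
qed

lemma V_eq:
  fixes c :: "real \<Rightarrow> real"
  assumes ub: "\<And>w. admissible_path c t x w \<Longrightarrow> rho * w 0 - path_cost c t w \<le> F"
    and lb: "\<exists>w. admissible_path c t x w \<and> rho * w 0 - path_cost c t w = F"
  shows "value_fn c (\<lambda>y. rho * y) x t = F"
  unfolding value_fn_def
proof (rule cSup_eq_maximum)
  show "F \<in> {rho * w 0 - path_cost c t w |w. admissible_path c t x w}" using lb by auto
  show "\<And>z. z \<in> {rho * w 0 - path_cost c t w |w. admissible_path c t x w} \<Longrightarrow> z \<le> F"
    using ub by auto
qed

lemma DERIV_from_eq:
  fixes V F :: "real \<Rightarrow> real"
  assumes "l < x" "x < u" and eq: "\<And>y. l < y \<Longrightarrow> y < u \<Longrightarrow> V y = F y"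
    and d: "(F has_real_derivative D) (at x)"
  shows "(V has_real_derivative D) (at x)"
proof -
  have ev: "eventually (\<lambda>y. y \<in> {l<..<u}) (nhds x)" using assms(1,2) by (intro eventually_nhds_in_open) auto
  have "eventually (\<lambda>y. V y = F y) (nhds x)" using ev by eventually_elim (use eq in auto)
  then have "(V has_real_derivative D) (at x) \<longleftrightarrow> (F has_real_derivative D) (at x)"
    by (rule DERIV_cong_ev[OF refl _ refl])
  then show ?thesis using d by simp
qed

context
  fixes c1 c2 rho t :: real
  assumes c2pos: "c2 > 0" and c21: "c2 \<le> c1" and rho0: "0 < rho" and rho1: "rho < 1" and tpos: "t > 0"
begin

lemma c1pos: "c1 > 0" using c2pos c21 by simp

lemma LL_straight_left:
  assumes "x < 0" "x - c1*(1-2*rho)*t < 0"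
  shows "\<exists>w. admissible_path (step_speed c1 c2) t x w \<and> rho * w 0 - path_cost (step_speed c1 c2) t w
           = rho * x - c1 * rho * (1 - rho) * t"
proof -
  let ?A = "c1*(1-2*rho)"
  have hc: "step_speed c1 c2 (x + ?A*(s-t)) = c1" if "0 \<le> s" "s < t" for s
  proof -
    have "x + ?A*(s-t) < 0"
    proof (cases "?A \<ge> 0")
      case True then have "?A*(s-t) \<le> 0" using that by (simp add: mult_nonneg_nonpos)
      then show ?thesis using assms by linarith
    next
      case False then have "?A*(s-t) \<le> ?A * (0 - t)" using that by (intro mult_left_mono_neg) auto
      then show ?thesis using assms by (simp add: algebra_simps)
    qed
    then show ?thesis by (simp add: step_speed_def)
  qed
  note P = path2_value[of t t "step_speed c1 c2" x ?A c1 ?A c1, OF _ order_refl hc]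
  have g: "tasep_g (?A / c1) = rho^2" using g_dens[of rho] rho0 rho1 c1pos by simp
  have w0: "path2 x ?A ?A t 0 = x - ?A*t" using P(3) tpos by simp
  have cst: "path_cost (step_speed c1 c2) t (path2 x ?A ?A t) = t*(c1*rho^2)" using P(2) g tpos by simp
  have "rho * (x - ?A*t) - t*(c1*rho^2) = rho*x - c1*rho*(1-rho)*t" by (simp add: algebra_simps power2_eq_square)
  then show ?thesis using P(1) w0 cst tpos by auto
qed

lemma LL_straight_right:
  assumes "0 \<le> x - c2*(1-2*p)*t" "0 \<le> p" "p \<le> 1" "0 \<le> x"
  shows "\<exists>w. admissible_path (step_speed c1 c2) t x w \<and> rho * w 0 - path_cost (step_speed c1 c2) t w
           = rho * (x - c2*(1-2*p)*t) - t * c2 * p^2"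
proof -
  let ?A = "c2*(1-2*p)"
  have hc: "step_speed c1 c2 (x + ?A*(s-t)) = c2" if "0 \<le> s" "s < t" for s
  proof -
    have "x + ?A*(s-t) \<ge> 0"
    proof (cases "?A \<ge> 0")
      case True then have "?A*(0-t) \<le> ?A*(s-t)" using that by (intro mult_left_mono) auto
      then show ?thesis using assms by (simp add: algebra_simps)
    next
      case False then have "?A*(s-t) \<ge> 0" using that by (simp add: mult_nonpos_nonpos)
      then show ?thesis using assms by linarith
    qed
    then show ?thesis by (simp add: step_speed_def)
  qed
  note P = path2_value[of t t "step_speed c1 c2" x ?A c2 ?A c2, OF _ order_refl hc]
  have g: "tasep_g (?A / c2) = p^2" using g_dens[of p] assms c2pos by simp
  have w0: "path2 x ?A ?A t 0 = x - ?A*t" using P(3) tpos by simp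
  have cst: "path_cost (step_speed c1 c2) t (path2 x ?A ?A t) = t*(c2*p^2)" using P(2) g tpos by simp
  have "rho * (x - ?A*t) - t*(c2*p^2) = rho * (x - c2*(1-2*p)*t) - t * c2 * p^2" by (simp add: algebra_simps)
  then show ?thesis using P(1) w0 cst tpos by auto
qed

end




context
  fixes c1 c2 rho t :: real
  assumes c2pos: "c2 > 0" and c21: "c2 \<le> c1" and rho0: "0 < rho" and rho1: "rho < 1" and tpos: "t > 0"
begin

lemma c1pos': "c1 > 0" using c2pos c21 by simp

lemma LL_two_gen:
  fixes A B k1 k2 x :: real
  assumes B: "B \<noteq> 0" and s0: "0 \<le> t - x/B" "t - x/B \<le> t"
    and hc1: "\<And>s. 0 \<le> s \<Longrightarrow> s < t - x/B \<Longrightarrow> step_speed c1 c2 (0 + A*(s-(t - x/B))) = k1"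
    and hc2: "\<And>s. t - x/B < s \<Longrightarrow> s \<le> t \<Longrightarrow> step_speed c1 c2 (0 + B*(s-(t - x/B))) = k2"
  shows "\<exists>w. admissible_path (step_speed c1 c2) t x w \<and> rho * w 0 - path_cost (step_speed c1 c2) t w
           = - rho * A * (t - x/B) - (t - x/B) * (k1 * tasep_g (A/k1)) - (x/B) * (k2 * tasep_g (B/k2))"
proof -
  note P = path2_value[OF s0 hc1 hc2]
  have e: "0 + B * (t - (t - x/B)) = x" using B by simp
  have adm: "admissible_path (step_speed c1 c2) t x (path2 0 A B (t - x/B))" using P(1) e by simp
  have w0: "path2 0 A B (t-x/B) 0 = - A*(t - x/B)" using P(3) by simp
  have tt: "t - (t - x/B) = x/B" by simp
  have cst: "path_cost (step_speed c1 c2) t (path2 0 A B (t - x/B)) = (t - x/B) * (k1 * tasep_g (A/k1)) + (x/B) * (k2*tasep_g (B/k2))"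
    using P(2) unfolding tt .
  define z0 where "z0 = t - x/B"
  define xb where "xb = x/B"
  have "rho * path2 0 A B (t - x/B) 0 - path_cost (step_speed c1 c2) t (path2 0 A B (t - x/B))
      = rho * (- A*z0) - (z0 * (k1 * tasep_g (A/k1)) + xb * (k2*tasep_g (B/k2)))"
    unfolding w0 cst z0_def xb_def by simp
  also have "\<dots> = - rho * A * z0 - z0 * (k1 * tasep_g (A/k1)) - xb * (k2 * tasep_g (B/k2))"
    by (simp add: algebra_simps)
  finally show ?thesis using adm unfolding z0_def xb_def by blast
qed

lemma R5:
  assumes x: "x > 0" "x > (1 - 2*rho)*t*c2"
  shows "value_fn (step_speed c1 c2) (\<lambda>y. rho*y) x t = rho * x - c2 * rho * (1 - rho) * t"
proof (rule V_eq)
  interpret kconds c1 c2 rho rho rho "c2*rho*(1-rho)"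
  proof
    show "c2 * rho * (1 - rho) \<le> c1 * rho * (1 - rho)"
      using c21 rho0 rho1 by (intro mult_right_mono) auto
  qed (use c2pos c21 rho0 rho1 in auto)
  fix w assume "admissible_path (step_speed c1 c2) t x w"
  from kink_ub[OF this] show "rho * w 0 - path_cost (step_speed c1 c2) t w \<le> rho * x - c2 * rho * (1 - rho) * t"
    using tpos x by (simp add: algebra_simps)
next
  have "\<exists>w. admissible_path (step_speed c1 c2) t x w \<and> rho * w 0 - path_cost (step_speed c1 c2) t w
           = rho * (x - c2*(1-2*rho)*t) - t * c2 * rho^2"
    using LL_straight_right[OF c2pos c21 rho0 rho1 tpos, of x rho] x rho0 rho1 by (auto simp: algebra_simps)
  then show "\<exists>w. admissible_path (step_speed c1 c2) t x w \<and> rho * w 0 - path_cost (step_speed c1 c2) t w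
           = rho * x - c2 * rho * (1 - rho) * t"
    by (simp add: power2_eq_square algebra_simps)
qed

lemma R4:
  fixes x p :: real
  defines "p \<equiv> 1/2 * (1 - x / (t * c2))"
  assumes x: "x > 0" "x < c2*(1 - 2*rho)*t" and cond: "c2 * p * (1 - p) \<le> c1 * rho * (1 - rho)"
  shows "value_fn (step_speed c1 c2) (\<lambda>y. rho*y) x t = - t * c2 * p^2"
proof -
  have xe: "x = c2*(1-2*p)*t" unfolding p_def using c2pos tpos by (simp add: field_simps)
  have ct: "c2 * t > 0" using c2pos tpos by simp
  have "(c2*t)*(1-2*p) < (c2*t)*(1-2*rho)" using x xe by (simp add: algebra_simps)
  then have "1-2*p < 1-2*rho" using ct mult_less_cancel_left_pos by blast
  then have pr: "rho \<le> p" by simp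
  have "0 < (c2*t)*(1-2*p)" using x xe by (simp add: algebra_simps)
  then have "0 < 1-2*p" using ct zero_less_mult_pos by blast
  then have p1: "p \<le> 1/2" by simp
  show ?thesis
  proof (rule V_eq)
    interpret kconds c1 c2 rho rho p "c2*p*(1-p)"
    proof
      show "c2 * p * (1 - p) \<le> c1 * rho * (1 - rho)" using cond .
    qed (use c2pos c21 rho0 rho1 pr p1 in auto)
    fix w assume "admissible_path (step_speed c1 c2) t x w"
    from kink_ub[OF this] have "rho * w 0 - path_cost (step_speed c1 c2) t w \<le> p * x - c2 * p * (1 - p) * t"
      using tpos x by simp
    also have "\<dots> = - t * c2 * p^2" by (subst xe) (simp add: power2_eq_square algebra_simps)
    finally show "rho * w 0 - path_cost (step_speed c1 c2) t w \<le> - t * c2 * p^2" .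
  next
    show "\<exists>w. admissible_path (step_speed c1 c2) t x w \<and> rho * w 0 - path_cost (step_speed c1 c2) t w
           = - t * c2 * p^2"
      using LL_straight_right[OF c2pos c21 rho0 rho1 tpos, of x p] x xe pr p1 rho0 by auto
  qed
qed

end




context
  fixes c1 c2 rho t :: real
  assumes c2pos: "c2 > 0" and c21: "c2 \<le> c1" and rho0: "0 < rho" and rho1: "rho < 1" and tpos: "t > 0"
begin

lemma shock_ub:
  fixes s p1 p2 a2 x :: real and w
  assumes kc: "kconds c1 c2 rho p1 p2 a2"
    and a2: "a2 = c1 * s * (1 - s)"
    and s: "0 \<le> s" "s \<le> rho" "rho \<le> 1 - s" and x: "x < 0"
    and adm: "admissible_path (step_speed c1 c2) t x w"
  shows "rho * w 0 - path_cost (step_speed c1 c2) t w \<le> max (rho*x - c1*rho*(1-rho)*t) ((1-s)*x - a2*t)"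
proof -
  have q: "0 \<le> 1 - s" "1 - s \<le> 1" "a2 \<le> c1 * (1-s) * (1 - (1-s))" using s rho1 a2 by (auto simp: algebra_simps)
  have aL: "c1*rho*(1-rho) \<le> c1 * rho * (1 - rho)" by simp
  from kconds.split_ub[OF kc adm _ x q aL] tpos rho1
  show ?thesis by (simp add: mult.commute mult.left_commute)
qed

lemma shock_diff:
  fixes s a2 x :: real
  assumes a2: "a2 = c1 * s * (1 - s)"
  shows "((1-s)*x - a2*t) - (rho*x - c1*rho*(1-rho)*t) = (1 - rho - s) * (x + t*c1*(rho - s))"
  unfolding a2 by (simp add: algebra_simps)

lemma shock_left:
  fixes s p1 p2 a2 x :: real
  assumes kc: "kconds c1 c2 rho p1 p2 a2"
    and a2: "a2 = c1 * s * (1 - s)"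
    and s: "0 \<le> s" "s \<le> rho" "rho \<le> 1 - s" and x: "x < - t*c1*(rho - s)"
  shows "value_fn (step_speed c1 c2) (\<lambda>y. rho*y) x t = rho*x - c1*rho*(1-rho)*t"
proof (rule V_eq)
  have c1: "c1 > 0" using c2pos c21 by simp
  have "0 \<le> t*c1*(rho - s)" using tpos c1 s by simp
  then have x0: "x < 0" using x by linarith
  have "(1 - rho - s) * (x + t*c1*(rho - s)) \<le> 0"
    using s x by (intro mult_nonneg_nonpos) auto
  then have le: "(1-s)*x - a2*t \<le> rho*x - c1*rho*(1-rho)*t" using shock_diff[OF a2, of x] by linarith
  fix w assume "admissible_path (step_speed c1 c2) t x w"
  from shock_ub[OF kc a2 s x0 this] le
  show "rho * w 0 - path_cost (step_speed c1 c2) t w \<le> rho*x - c1*rho*(1-rho)*t" by simp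
next
  have c1: "c1 > 0" using c2pos c21 by simp
  have "x - c1*(1-2*rho)*t < - t*c1*(1 - rho - s)" using x by (simp add: algebra_simps)
  also have "\<dots> \<le> 0" using tpos c1 s by simp
  finally have x2: "x - c1*(1-2*rho)*t < 0" .
  have "0 \<le> t*c1*(rho - s)" using tpos c1 s by simp
  then have x0: "x < 0" using x by linarith
  show "\<exists>w. admissible_path (step_speed c1 c2) t x w \<and> rho * w 0 - path_cost (step_speed c1 c2) t w
           = rho*x - c1*rho*(1-rho)*t"
    using LL_straight_left[OF c2pos c21 rho0 rho1 tpos x0 x2] .
qed

lemma shock_right:
  fixes s p1 p2 a2 pq x :: real
  assumes kc: "kconds c1 c2 rho p1 p2 a2"
    and a2: "a2 = c1 * s * (1 - s)" and pp: "rho*c2*(1-2*pq) + c2*pq^2 = a2" "1/2 \<le> pq" "pq \<le> 1"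
    and s: "0 \<le> s" "s \<le> rho" "rho \<le> 1 - s" "s < 1/2"
    and x: "- t*c1*(rho - s) < x" "x < 0"
  shows "value_fn (step_speed c1 c2) (\<lambda>y. rho*y) x t = (1-s)*x - a2*t"
proof (rule V_eq)
  have "(1 - rho - s) * (x + t*c1*(rho - s)) \<ge> 0"
    using s x by (intro mult_nonneg_nonneg) auto
  then have le: "rho*x - c1*rho*(1-rho)*t \<le> (1-s)*x - a2*t" using shock_diff[OF a2, of x] by linarith
  fix w assume "admissible_path (step_speed c1 c2) t x w"
  from shock_ub[OF kc a2 s(1-3) x(2) this] le
  show "rho * w 0 - path_cost (step_speed c1 c2) t w \<le> (1-s)*x - a2*t" by simp
next
  have c1: "c1 > 0" using c2pos c21 by simp
  define A where "A = c2*(1-2*pq)"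
  define B where "B = - c1*(1-2* s)"
  have Bn: "B < 0" unfolding B_def using c1 s by simp
  have A0: "A \<le> 0" unfolding A_def using c2pos pp by (simp add: mult_nonneg_nonpos)
  have Bm: "B = -(c1*(1-2 * s))" unfolding B_def by simp
  have xB: "x/B = - x / (c1*(1-2 * s))" unfolding Bm by (simp only: divide_minus_right minus_divide_left)
  have xB0: "0 \<le> x/B" using Bn x by (simp add: divide_nonpos_neg)
  have "-x \<le> t*c1*(1-2* s)"
  proof -
    have "t*c1*(rho-s) \<le> t*c1*(1-2* s)" using tpos c1 s by (intro mult_left_mono) auto
    then show ?thesis using x by linarith
  qed
  moreover have K: "c1*(1-2 * s) > 0" using c1 s by simp
  ultimately have "- x / (c1*(1-2 * s)) \<le> t"
    by (subst pos_divide_le_eq[OF K]) (simp add: mult.assoc mult.commute mult.left_commute)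
  then have xBt: "x/B \<le> t" unfolding xB .
  have s0: "0 \<le> t - x/B" "t - x/B \<le> t" using xB0 xBt by auto
  have hc1: "step_speed c1 c2 (0 + A*(s'-(t - x/B))) = c2" if "0 \<le> s'" "s' < t - x/B" for s'
  proof -
    have "0 \<le> A*(s'-(t - x/B))" using A0 that by (intro mult_nonpos_nonpos) auto
    then show ?thesis by (simp add: step_speed_def)
  qed
  have hc2: "step_speed c1 c2 (0 + B*(s'-(t - x/B))) = c1" if "t - x/B < s'" "s' \<le> t" for s'
  proof -
    have "B*(s'-(t - x/B)) < 0" using Bn that by (intro mult_neg_pos) auto
    then show ?thesis by (simp add: step_speed_def)
  qed
  have gA: "tasep_g (A/c2) = pq^2" unfolding A_def using c2pos g_dens[of pq] pp by simp
  have gB: "tasep_g (B/c1) = (1-s)^2"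
  proof -
    have "B/c1 = 1 - 2*(1-s)" unfolding B_def using c1 by (simp add: field_simps)
    then show ?thesis using g_dens[of "1-s"] s rho1 by simp
  qed
  obtain w where w: "admissible_path (step_speed c1 c2) t x w"
    "rho * w 0 - path_cost (step_speed c1 c2) t w
       = - rho * A * (t - x/B) - (t - x/B) * (c2 * tasep_g (A/c2)) - (x/B) * (c1 * tasep_g (B/c1))"
    using LL_two_gen[OF c2pos c21 rho0 rho1 tpos _ s0 hc1 hc2] Bn by auto
  define xb where "xb = x/B"
  have xbB: "xb * B = x" unfolding xb_def using Bn by simp
  have "- rho * A * (t - xb) - (t - xb) * (c2 * pq^2) - xb * (c1 * (1-s)^2)
        = - (t - xb) * (rho*c2*(1-2*pq) + c2*pq^2) - xb * (c1 * (1-s)^2)"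
    unfolding A_def by (simp add: algebra_simps)
  also have "\<dots> = - (t - xb) * a2 - xb * (c1 * (1-s)^2)" using pp(1) by simp
  also have "\<dots> = (1-s)*(xb*B) - a2*t"
    unfolding a2 B_def by (simp add: algebra_simps power2_eq_square)
  finally have "- rho * A * (t - xb) - (t - xb) * (c2 * pq^2) - xb * (c1 * (1-s)^2) = (1-s)*x - a2*t"
    using xbB by simp
  then show "\<exists>w. admissible_path (step_speed c1 c2) t x w \<and> rho * w 0 - path_cost (step_speed c1 c2) t w
           = (1-s)*x - a2*t"
    using w gA gB unfolding xb_def by auto
qed

end




lemma rare_deriv:
  fixes t c2 x :: real
  assumes "t > 0" "c2 > 0"
  shows "((\<lambda>y. - t * c2 * (1/2 * (1 - y / (t * c2)))^2) has_real_derivative 1/2 * (1 - x / (t * c2))) (at x)"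
proof -
  have d: "((\<lambda>y. - t * c2 * (1/2 * (1 - y / (t * c2)))^2) has_real_derivative
      - t * c2 * (2 * (1/2 * (1 - x / (t * c2))) * (1/2 * (0 - 1 / (t * c2))))) (at x)"
    by (auto intro!: derivative_eq_intros)
  have e: "- t * c2 * (2 * (1/2 * (1 - x / (t * c2))) * (1/2 * (0 - 1 / (t * c2)))) = 1/2 * (1 - x / (t * c2))"
    using assms by (simp add: field_simps)
  show ?thesis using d unfolding e .
qed

lemma lin_deriv: "((\<lambda>y. k * y - b) has_real_derivative k) (at (x::real))"
  by (auto intro!: derivative_eq_intros)

lemma sqrt_half_facts:
  fixes D :: real
  assumes "0 \<le> D" "D \<le> 1"
  defines "r \<equiv> 1/2 - 1/2 * sqrt D"
  shows "0 \<le> r" "r \<le> 1/2" "r * (1 - r) = (1 - D) / 4" "D > 0 \<Longrightarrow> r < 1/2"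
proof -
  have s1: "sqrt D \<le> 1" using assms by simp
  have s0: "0 \<le> sqrt D" using assms by simp
  have sq: "sqrt D * sqrt D = D" using assms by simp
  show "0 \<le> r" "r \<le> 1/2" using s0 s1 unfolding r_def by auto
  show "r * (1 - r) = (1 - D) / 4" unfolding r_def using sq by (simp add: algebra_simps)
  show "D > 0 \<Longrightarrow> r < 1/2" unfolding r_def by simp
qed

lemma incr_pp:
  fixes u v :: real
  assumes "u \<le> v" "u + v \<le> 1"
  shows "u * (1 - u) \<le> v * (1 - v)"
proof -
  have "0 \<le> (v - u) * (1 - u - v)" using assms by simp
  then show ?thesis by (simp add: algebra_simps)
qed

lemma incr_pp_strict:
  fixes u v :: real
  assumes "u < v" "u + v < 1"
  shows "u * (1 - u) < v * (1 - v)"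
proof -
  have "0 < (v - u) * (1 - u - v)" using assms by simp
  then show ?thesis by (simp add: algebra_simps)
qed

context
  fixes c1 c2 rho t :: real
  assumes c2pos: "c2 > 0" and c21: "c2 \<le> c1" and rho0: "0 < rho" and rho1: "rho < 1" and tpos: "t > 0"
begin

lemma rs_facts:
  defines "rs \<equiv> 1/2 - 1/2 * sqrt (1 - c2 / c1)"
  shows "0 \<le> rs" "rs \<le> 1/2" "c1 * rs * (1 - rs) = c2 / 4"
proof -
  have c1: "c1 > 0" using c2pos c21 by simp
  have D: "0 \<le> 1 - c2/c1" "1 - c2/c1 \<le> 1" using c1 c2pos c21 by (auto simp: field_simps)
  note F = sqrt_half_facts[OF D]
  show "0 \<le> rs" "rs \<le> 1/2" using F unfolding rs_def by auto
  have "c1 * (rs * (1 - rs)) = c1 * ((1 - (1 - c2/c1)) / 4)" using F(3) unfolding rs_def by simp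
  then show "c1 * rs * (1 - rs) = c2 / 4" using c1 by (simp add: field_simps)
qed

end




context
  fixes c1 c2 rho t :: real
  assumes c2pos: "c2 > 0" and c21: "c2 \<le> c1" and rho0: "0 < rho" and rho1: "rho < 1" and tpos: "t > 0"
begin

lemma pp_quarter: "(p::real) * (1 - p) \<le> 1/4"
proof -
  have "0 \<le> (p - 1/2)^2" by simp
  then show ?thesis by (simp add: power2_eq_square algebra_simps)
qed

lemma case2:
  defines "V \<equiv> (\<lambda>x. value_fn (step_speed c1 c2) (\<lambda>y. rho * y) x t)"
      and "rs \<equiv> 1/2 - 1/2 * sqrt (1 - c2 / c1)"
  assumes r: "rs \<le> rho" "rho \<le> 1/2"
  shows
        "(\<forall>x. x < - t * c1 * (rho - rs) \<longrightarrow> (V has_real_derivative rho) (at x)) \<and>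
        (\<forall>x. - t * c1 * (rho - rs) < x \<and> x < 0 \<longrightarrow> (V has_real_derivative (1 - rs)) (at x)) \<and>
        (\<forall>x. 0 < x \<and> x < (1 - 2 * rho) * t * c2 \<longrightarrow>
              (V has_real_derivative (1/2 * (1 - x / (t * c2)))) (at x)) \<and>
        (\<forall>x. x > (1 - 2 * rho) * t * c2 \<longrightarrow> (V has_real_derivative rho) (at x))"
proof -
  note RS = rs_facts[OF c2pos c21 rho0 rho1 tpos, folded rs_def]
  have c1: "c1 > 0" using c2pos c21 by simp
  have "rs * (1 - rs) \<le> rho * (1 - rho)" using incr_pp[of rs rho] r RS by simp
  then have "c1 * (rs * (1 - rs)) \<le> c1 * (rho * (1 - rho))" using c1 by (intro mult_left_mono) auto
  then have "c1 * rs * (1 - rs) \<le> c1 * rho * (1 - rho)" by (simp add: mult.assoc)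
  then have q: "c2/4 \<le> c1 * rho * (1 - rho)" using RS(3) by linarith
  have kc: "kconds c1 c2 rho rho (1/2) (c2/4)"
    by unfold_locales (use c2pos c21 rho0 r q in auto)
  have a2: "c2/4 = c1 * rs * (1 - rs)" using RS(3) by simp
  have pp: "rho*c2*(1-2*(1/2)) + c2*(1/2)^2 = c2/4" "1/2 \<le> (1/2::real)" "(1/2::real) \<le> 1"
    by (simp_all add: power2_eq_square)
  have s: "0 \<le> rs" "rs \<le> rho" "rho \<le> 1 - rs" using RS r by auto
  show ?thesis
  proof (intro conjI allI impI)
    fix x assume x: "x < - t * c1 * (rho - rs)"
    show "(V has_real_derivative rho) (at x)"
    proof (rule DERIV_from_eq[of "x - 1" x "- t * c1 * (rho - rs)"])
      show "V y = rho * y - c1 * rho * (1 - rho) * t" if "x - 1 < y" "y < - t * c1 * (rho - rs)" for y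
        unfolding V_def using shock_left[OF c2pos c21 rho0 rho1 tpos kc a2 s] that by simp
    qed (use x lin_deriv in auto)
  next
    fix x assume x: "- t * c1 * (rho - rs) < x \<and> x < 0"
    have "0 < t * c1 * (rho - rs)" using x by linarith
    then have "rs < rho" using tpos c1 mult_pos_pos[OF tpos c1] by (auto simp: zero_less_mult_iff)
    then have s4: "rs < 1/2" using r by simp
    show "(V has_real_derivative 1 - rs) (at x)"
    proof (rule DERIV_from_eq[of "- t * c1 * (rho - rs)" x 0])
      show "V y = (1 - rs) * y - c2/4 * t" if "- t * c1 * (rho - rs) < y" "y < 0" for y
        unfolding V_def using shock_right[OF c2pos c21 rho0 rho1 tpos kc a2 pp s s4] that by simp
    qed (use x lin_deriv in auto)
  next
    fix x assume x: "0 < x \<and> x < (1 - 2 * rho) * t * c2"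
    show "(V has_real_derivative 1/2 * (1 - x / (t * c2))) (at x)"
    proof (rule DERIV_from_eq[of 0 x "(1 - 2 * rho) * t * c2"])
      show "V y = - t * c2 * (1/2 * (1 - y / (t * c2)))^2" if "0 < y" "y < (1 - 2 * rho) * t * c2" for y
      proof -
        let ?p = "1/2 * (1 - y / (t * c2))"
        have "c2 * ?p * (1 - ?p) \<le> c2 * (1/4)"
          using pp_quarter[of ?p] c2pos by (simp add: mult.assoc mult_left_mono)
        then have cond: "c2 * ?p * (1 - ?p) \<le> c1 * rho * (1 - rho)" using q by simp
        have y2: "y < c2 * (1 - 2 * rho) * t" using that by (simp add: mult_ac)
        show ?thesis unfolding V_def using R4[OF c2pos c21 rho0 rho1 tpos that(1) y2 cond] by simp
      qed
    qed (use x rare_deriv[OF tpos c2pos] in auto)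
  next
    fix x assume x: "x > (1 - 2 * rho) * t * c2"
    have x0: "x > 0"
    proof -
      have "0 \<le> (1 - 2 * rho) * t * c2" using r tpos c2pos by simp
      then show ?thesis using x by linarith
    qed
    show "(V has_real_derivative rho) (at x)"
    proof (rule DERIV_from_eq[of "(1 - 2 * rho) * t * c2" x "x + 1"])
      show "V y = rho * y - c2 * rho * (1 - rho) * t" if "(1 - 2 * rho) * t * c2 < y" "y < x + 1" for y
      proof -
        have "0 \<le> (1 - 2 * rho) * t * c2" using r tpos c2pos by simp
        then have "y > 0" using that by linarith
        then show ?thesis unfolding V_def using R5[OF c2pos c21 rho0 rho1 tpos _ that(1)] by simp
      qed
    qed (use x lin_deriv in auto)
  qed
qed

end




context
  fixes c1 c2 rho t :: real
  assumes c2pos: "c2 > 0" and c21: "c2 \<le> c1" and rho0: "0 < rho" and rho1: "rho < 1" and tpos: "t > 0"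
begin

lemma case3:
  defines "V \<equiv> (\<lambda>x. value_fn (step_speed c1 c2) (\<lambda>y. rho * y) x t)"
      and "r \<equiv> 1/2 - 1/2 * sqrt (1 - 4 * rho * (1 - rho) * c2 / c1)"
  assumes r12: "rho \<ge> 1/2"
  shows
        "(\<forall>x. x < - t * c1 * (rho - r) \<longrightarrow> (V has_real_derivative rho) (at x)) \<and>
        (\<forall>x. - t * c1 * (rho - r) < x \<and> x < 0 \<longrightarrow> (V has_real_derivative (1 - r)) (at x)) \<and>
        (\<forall>x>0. (V has_real_derivative rho) (at x))"
proof -
  have c1: "c1 > 0" using c2pos c21 by simp
  have pr0: "0 \<le> rho * (1 - rho)" using rho0 rho1 by simp
  have pr4: "4 * (rho * (1 - rho)) \<le> 1" using pp_quarter[OF c2pos c21 rho0 rho1 tpos, of rho] by simp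
  have cc: "c2 / c1 \<le> 1" "0 \<le> c2 / c1" using c1 c2pos c21 by auto
  have "4 * (rho * (1 - rho)) * (c2 / c1) \<le> 1 * 1"
    using pr4 cc pr0 by (intro mult_mono) auto
  moreover have "0 \<le> 4 * (rho * (1 - rho)) * (c2 / c1)" using pr0 cc rho0 rho1 by (intro mult_nonneg_nonneg) auto
  ultimately have G: "0 \<le> 1 - 4 * rho * (1 - rho) * c2 / c1" "1 - 4 * rho * (1 - rho) * c2 / c1 \<le> 1"
    by (simp_all add: mult.assoc)
  note SF = sqrt_half_facts[OF G, folded r_def]
  have e1: "r * (1 - r) = (rho * (1 - rho) * c2) / c1" using SF(3) by simp
  have "c1 * r * (1 - r) = c1 * ((rho * (1 - rho) * c2) / c1)" using e1 by (simp add: mult.assoc)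
  also have "\<dots> = c2 * rho * (1 - rho)" using c1 by simp
  finally have cr: "c1 * r * (1 - r) = c2 * rho * (1 - rho)" .
  have a2le: "c2 * rho * (1 - rho) \<le> c1 * rho * (1 - rho)" using c21 pr0 by (simp add: mult.assoc mult_right_mono)
  have r1r: "r \<le> 1 - rho"
  proof (rule ccontr)
    assume "\<not> r \<le> 1 - rho"
    then have h: "1 - rho < r" by simp
    then have "(1 - rho) + r < 1" using SF(2) r12 by linarith
    from incr_pp_strict[OF h this] have "(1-rho)*(1-(1-rho)) < r * (1 - r)" .
    then have "rho*(1-rho) < r * (1 - r)" by (simp add: algebra_simps)
    then have "c1 * (rho*(1-rho)) < c1 * (r * (1 - r))" using c1 by (rule mult_strict_left_mono)
    then show False using cr a2le by (simp add: mult.assoc)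
  qed
  have kc: "kconds c1 c2 rho rho rho (c2 * rho * (1 - rho))"
    by unfold_locales (use c2pos c21 rho0 rho1 a2le in auto)
  have a2: "c2 * rho * (1 - rho) = c1 * r * (1 - r)" using cr by simp
  have pp: "rho*c2*(1-2*rho) + c2*rho^2 = c2 * rho * (1 - rho)" "1/2 \<le> rho" "rho \<le> 1"
    using r12 rho1 by (simp_all add: power2_eq_square algebra_simps)
  have s: "0 \<le> r" "r \<le> rho" "rho \<le> 1 - r" using SF r12 r1r by auto
  show ?thesis
  proof (intro conjI allI impI)
    fix x assume x: "x < - t * c1 * (rho - r)"
    show "(V has_real_derivative rho) (at x)"
    proof (rule DERIV_from_eq[of "x - 1" x "- t * c1 * (rho - r)"])
      show "V y = rho * y - c1 * rho * (1 - rho) * t" if "x - 1 < y" "y < - t * c1 * (rho - r)" for y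
        unfolding V_def using shock_left[OF c2pos c21 rho0 rho1 tpos kc a2 s] that by simp
    qed (use x lin_deriv in auto)
  next
    fix x assume x: "- t * c1 * (rho - r) < x \<and> x < 0"
    have "0 < t * c1 * (rho - r)" using x by linarith
    then have "r < rho" using tpos c1 mult_pos_pos[OF tpos c1] by (auto simp: zero_less_mult_iff)
    then have s4: "r < 1/2" using r1r by linarith
    show "(V has_real_derivative 1 - r) (at x)"
    proof (rule DERIV_from_eq[of "- t * c1 * (rho - r)" x 0])
      show "V y = (1 - r) * y - c2 * rho * (1 - rho) * t" if "- t * c1 * (rho - r) < y" "y < 0" for y
        unfolding V_def using shock_right[OF c2pos c21 rho0 rho1 tpos kc a2 pp s s4] that by simp
    qed (use x lin_deriv in auto)
  next
    fix x :: real assume x: "x > 0"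
    show "(V has_real_derivative rho) (at x)"
    proof (rule DERIV_from_eq[of 0 x "x + 1"])
      show "V y = rho * y - c2 * rho * (1 - rho) * t" if "0 < y" "y < x + 1" for y
      proof -
        have "(1 - 2 * rho) * t * c2 \<le> 0" using r12 tpos c2pos by (simp add: mult_nonpos_nonneg)
        then have "y > (1 - 2 * rho) * t * c2" using that by linarith
        then show ?thesis unfolding V_def using R5[OF c2pos c21 rho0 rho1 tpos that(1)] by simp
      qed
    qed (use x lin_deriv in auto)
  qed
qed

end




context
  fixes c1 c2 rho t :: real
  assumes c2pos: "c2 > 0" and c21: "c2 \<le> c1" and rho0: "0 < rho" and rho1: "rho < 1" and tpos: "t > 0"
begin

lemma case1:
  defines "V \<equiv> (\<lambda>x. value_fn (step_speed c1 c2) (\<lambda>y. rho * y) x t)"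
      and "rs \<equiv> 1/2 - 1/2 * sqrt (1 - c2 / c1)"
      and "r \<equiv> 1/2 - 1/2 * sqrt (1 - 4 * rho * (1 - rho) * c1 / c2)"
  assumes lt: "rho < rs"
  shows
        "(\<forall>x<0. (V has_real_derivative rho) (at x)) \<and>
        (\<forall>x. 0 < x \<and> x < c2 * (1 - 2 * r) * t \<longrightarrow> (V has_real_derivative r) (at x)) \<and>
        (\<forall>x. c2 * (1 - 2 * r) * t < x \<and> x < c2 * (1 - 2 * rho) * t \<longrightarrow>
              (V has_real_derivative (1/2 * (1 - x / (t * c2)))) (at x)) \<and>
        (\<forall>x. x > (1 - 2 * rho) * t * c2 \<longrightarrow> (V has_real_derivative rho) (at x))"
proof -
  have c1: "c1 > 0" using c2pos c21 by simp
  note RS = rs_facts[OF c2pos c21 rho0 rho1 tpos, folded rs_def]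
  have r12: "rho < 1/2" using lt RS by simp
  define E where "E = 1 - c2 / c1"
  have E0: "0 \<le> E" using c1 c2pos c21 unfolding E_def by (auto simp: field_simps)
  have "sqrt E < 1 - 2 * rho" using lt unfolding rs_def E_def by simp
  then have "(sqrt E)^2 < (1 - 2 * rho)^2" by (rule power_strict_mono) (use E0 in auto)
  then have "E < (1 - 2 * rho)^2" using E0 by simp
  then have "4 * rho * (1 - rho) < c2 / c1" unfolding E_def by (simp add: power2_eq_square algebra_simps)
  then have "4 * rho * (1 - rho) * c1 < c2" using c1 by (simp add: field_simps)
  then have X1: "4 * rho * (1 - rho) * c1 / c2 < 1" using c2pos by (simp add: field_simps)
  have pr0: "0 \<le> rho * (1 - rho)" using rho0 rho1 by simp
  have X0: "0 \<le> 4 * rho * (1 - rho) * c1 / c2" using pr0 c1 c2pos by simp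
  have G: "0 \<le> 1 - 4 * rho * (1 - rho) * c1 / c2" "1 - 4 * rho * (1 - rho) * c1 / c2 \<le> 1"
    using X0 X1 by simp_all
  note SF = sqrt_half_facts[OF G, folded r_def]
  have rlt: "r < 1/2" using SF(4) X1 by simp
  have e1: "r * (1 - r) = (rho * (1 - rho) * c1) / c2" using SF(3) by simp
  have "c2 * r * (1 - r) = c2 * ((rho * (1 - rho) * c1) / c2)" using e1 by (simp add: mult.assoc)
  also have "\<dots> = c1 * rho * (1 - rho)" using c2pos by simp
  finally have cr: "c2 * r * (1 - r) = c1 * rho * (1 - rho)" .
  have a2le: "c2 * rho * (1 - rho) \<le> c1 * rho * (1 - rho)" using c21 pr0 by (simp add: mult.assoc mult_right_mono)
  have rr: "rho \<le> r"
  proof (rule ccontr)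
    assume "\<not> rho \<le> r"
    then have h: "r < rho" by simp
    have "r + rho < 1" using h r12 by linarith
    from incr_pp_strict[OF h this] have "r * (1 - r) < rho * (1 - rho)" .
    then have "c2 * (r * (1 - r)) < c2 * (rho * (1 - rho))" using c2pos by (rule mult_strict_left_mono)
    then show False using cr a2le by (simp add: mult.assoc)
  qed
  define a where "a = c1 * rho * (1 - rho)"
  have kc: "kconds c1 c2 rho rho r a"
    by unfold_locales (use c2pos c21 rho0 rr SF cr rlt in \<open>auto simp: a_def\<close>)
  have Bpos: "c2 * (1 - 2 * r) > 0" using c2pos rlt by simp
  show ?thesis
  proof (intro conjI allI impI)
    fix x :: real assume x: "x < 0"
    show "(V has_real_derivative rho) (at x)"
    proof (rule DERIV_from_eq[of "x - 1" x 0])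
      show "V y = rho * y - a * t" if "x - 1 < y" "y < 0" for y
        unfolding V_def
      proof (rule V_eq)
        fix w assume "admissible_path (step_speed c1 c2) t y w"
        from kconds.kink_ub[OF kc this] that tpos
        show "rho * w 0 - path_cost (step_speed c1 c2) t w \<le> rho * y - a * t" by simp
      next
        have "0 < c1 * (1 - 2 * rho) * t" using c1 r12 tpos by simp
        then have "y - c1 * (1 - 2 * rho) * t < 0" using that by linarith
        from LL_straight_left[OF c2pos c21 rho0 rho1 tpos that(2) this]
        show "\<exists>w. admissible_path (step_speed c1 c2) t y w \<and> rho * w 0 - path_cost (step_speed c1 c2) t w = rho * y - a * t"
          by (simp add: a_def)
      qed
    qed (use x lin_deriv in auto)
  next
    fix x assume x: "0 < x \<and> x < c2 * (1 - 2 * r) * t"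
    show "(V has_real_derivative r) (at x)"
    proof (rule DERIV_from_eq[of 0 x "c2 * (1 - 2 * r) * t"])
      show "V y = r * y - a * t" if "0 < y" "y < c2 * (1 - 2 * r) * t" for y
        unfolding V_def
      proof (rule V_eq)
        fix w assume "admissible_path (step_speed c1 c2) t y w"
        from kconds.kink_ub[OF kc this] that tpos
        show "rho * w 0 - path_cost (step_speed c1 c2) t w \<le> r * y - a * t" by simp
      next
        define A where "A = c1 * (1 - 2 * rho)"
        define B where "B = c2 * (1 - 2 * r)"
        have Ap: "A > 0" unfolding A_def using c1 r12 by simp
        have Bp: "B > 0" unfolding B_def using Bpos .
        have yB0: "0 < y / B" using that Bp by simp
        have "y < B * t" using that unfolding B_def by (simp add: mult.assoc)
        then have yBt: "y / B < t" using Bp by (simp add: divide_less_eq mult.commute)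
        have s0: "0 \<le> t - y/B" "t - y/B \<le> t" using yB0 yBt by auto
        have hc1: "step_speed c1 c2 (0 + A * (s' - (t - y/B))) = c1" if "0 \<le> s'" "s' < t - y/B" for s'
        proof -
          have "A * (s' - (t - y/B)) < 0" using Ap that by (intro mult_pos_neg) auto
          then show ?thesis by (simp add: step_speed_def)
        qed
        have hc2: "step_speed c1 c2 (0 + B * (s' - (t - y/B))) = c2" if "t - y/B < s'" "s' \<le> t" for s'
        proof -
          have "B * (s' - (t - y/B)) > 0" using Bp that by (intro mult_pos_pos) auto
          then show ?thesis by (simp add: step_speed_def)
        qed
        have gA: "tasep_g (A/c1) = rho^2" unfolding A_def using c1 g_dens[of rho] rho0 rho1 by simp
        have gB: "tasep_g (B/c2) = r^2" unfolding B_def using c2pos g_dens[of r] SF rlt by simp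
        obtain w where w: "admissible_path (step_speed c1 c2) t y w"
          "rho * w 0 - path_cost (step_speed c1 c2) t w
             = - rho * A * (t - y/B) - (t - y/B) * (c1 * tasep_g (A/c1)) - (y/B) * (c2 * tasep_g (B/c2))"
          using LL_two_gen[OF c2pos c21 rho0 rho1 tpos _ s0 hc1 hc2] Bp by auto
        define yb where "yb = y/B"
        have ybB: "yb * B = y" unfolding yb_def using Bp by simp
        have "- rho * A * (t - yb) - (t - yb) * (c1 * rho^2) - yb * (c2 * r^2)
              = - (t - yb) * (c1 * rho * (1 - rho)) - yb * (c2 * r^2)"
          unfolding A_def by (simp add: algebra_simps power2_eq_square)
        also have "\<dots> = - (t - yb) * (c2 * r * (1 - r)) - yb * (c2 * r^2)" using cr by simp
        also have "\<dots> = r * (yb * B) - c2 * r * (1 - r) * t"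
          unfolding B_def by (simp add: algebra_simps power2_eq_square)
        finally have "- rho * A * (t - yb) - (t - yb) * (c1 * rho^2) - yb * (c2 * r^2) = r * y - a * t"
          using ybB cr unfolding a_def by simp
        then show "\<exists>w. admissible_path (step_speed c1 c2) t y w \<and> rho * w 0 - path_cost (step_speed c1 c2) t w = r * y - a * t"
          using w gA gB unfolding yb_def by auto
      qed
    qed (use x lin_deriv in auto)
  next
    fix x assume x: "c2 * (1 - 2 * r) * t < x \<and> x < c2 * (1 - 2 * rho) * t"
    show "(V has_real_derivative 1/2 * (1 - x / (t * c2))) (at x)"
    proof (rule DERIV_from_eq[of "c2 * (1 - 2 * r) * t" x "c2 * (1 - 2 * rho) * t"])
      show "V y = - t * c2 * (1/2 * (1 - y / (t * c2)))^2"
        if "c2 * (1 - 2 * r) * t < y" "y < c2 * (1 - 2 * rho) * t" for y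
      proof -
        let ?p = "1/2 * (1 - y / (t * c2))"
        have ct: "c2 * t > 0" using c2pos tpos by simp
        have ye: "y = (c2 * t) * (1 - 2 * ?p)" using c2pos tpos by (simp add: field_simps)
        have "(c2 * t) * (1 - 2 * r) < (c2 * t) * (1 - 2 * ?p)" using that(1) ye by (simp add: mult_ac)
        then have "1 - 2 * r < 1 - 2 * ?p" using ct mult_less_cancel_left_pos by blast
        then have pr: "?p \<le> r" by simp
        have y0: "0 < y" using that Bpos tpos by (smt (verit) mult_pos_pos)
        have "?p + r \<le> 1" using pr rlt by linarith
        from incr_pp[OF pr this] have "?p * (1 - ?p) \<le> r * (1 - r)" .
        then have "c2 * (?p * (1 - ?p)) \<le> c2 * (r * (1 - r))" using c2pos by (intro mult_left_mono) auto
        moreover have cr': "c2 * (r * (1 - r)) = c1 * rho * (1 - rho)" using cr by (metis mult.assoc)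
        ultimately have "c2 * (?p * (1 - ?p)) \<le> c1 * rho * (1 - rho)" by linarith
        then have cond: "c2 * ?p * (1 - ?p) \<le> c1 * rho * (1 - rho)" by (metis mult.assoc)
        show ?thesis unfolding V_def using R4[OF c2pos c21 rho0 rho1 tpos y0 that(2) cond] by simp
      qed
    qed (use x rare_deriv[OF tpos c2pos] in auto)
  next
    fix x assume x: "x > (1 - 2 * rho) * t * c2"
    show "(V has_real_derivative rho) (at x)"
    proof (rule DERIV_from_eq[of "(1 - 2 * rho) * t * c2" x "x + 1"])
      show "V y = rho * y - c2 * rho * (1 - rho) * t" if "(1 - 2 * rho) * t * c2 < y" "y < x + 1" for y
      proof -
        have "0 \<le> (1 - 2 * rho) * t * c2" using r12 tpos c2pos by simp
        then have "y > 0" using that by linarith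
        then show ?thesis unfolding V_def using R5[OF c2pos c21 rho0 rho1 tpos _ that(1)] by simp
      qed
    qed (use x lin_deriv in auto)
  qed
qed

end


theorem corollary4p3:
  fixes c1 c2 rho t :: real
  assumes "c2 > 0" and "c1 \<ge> c2" and "0 < rho" and "rho < 1" and "t > 0"
  defines "V \<equiv> (\<lambda>x. value_fn (step_speed c1 c2) (\<lambda>y. rho * y) x t)"
      and "rs \<equiv> 1/2 - 1/2 * sqrt (1 - c2 / c1)"
  shows
   "(rho < rs \<longrightarrow>
      (let r = 1/2 - 1/2 * sqrt (1 - 4 * rho * (1 - rho) * c1 / c2) in
        (\<forall>x<0. (V has_real_derivative rho) (at x)) \<and>
        (\<forall>x. 0 < x \<and> x < c2 * (1 - 2 * r) * t \<longrightarrow> (V has_real_derivative r) (at x)) \<and>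
        (\<forall>x. c2 * (1 - 2 * r) * t < x \<and> x < c2 * (1 - 2 * rho) * t \<longrightarrow>
              (V has_real_derivative (1/2 * (1 - x / (t * c2)))) (at x)) \<and>
        (\<forall>x. x > (1 - 2 * rho) * t * c2 \<longrightarrow> (V has_real_derivative rho) (at x))))
    \<and>
    (rs \<le> rho \<and> rho \<le> 1/2 \<longrightarrow>
        (\<forall>x. x < - t * c1 * (rho - rs) \<longrightarrow> (V has_real_derivative rho) (at x)) \<and>
        (\<forall>x. - t * c1 * (rho - rs) < x \<and> x < 0 \<longrightarrow> (V has_real_derivative (1 - rs)) (at x)) \<and>
        (\<forall>x. 0 < x \<and> x < (1 - 2 * rho) * t * c2 \<longrightarrow>
              (V has_real_derivative (1/2 * (1 - x / (t * c2)))) (at x)) \<and>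
        (\<forall>x. x > (1 - 2 * rho) * t * c2 \<longrightarrow> (V has_real_derivative rho) (at x)))
    \<and>
    (rho \<ge> 1/2 \<longrightarrow>
      (let r = 1/2 - 1/2 * sqrt (1 - 4 * rho * (1 - rho) * c2 / c1) in
        (\<forall>x. x < - t * c1 * (rho - r) \<longrightarrow> (V has_real_derivative rho) (at x)) \<and>
        (\<forall>x. - t * c1 * (rho - r) < x \<and> x < 0 \<longrightarrow> (V has_real_derivative (1 - r)) (at x)) \<and>
        (\<forall>x>0. (V has_real_derivative rho) (at x))))"
  proof -
  note C1 = case1[OF assms(1-5)] and C2 = case2[OF assms(1-5)] and C3 = case3[OF assms(1-5)]
  show ?thesis
    unfolding Let_def V_def rs_def
    using C1 C2 C3 by blast
qed

end
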